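(* Let $G=(V,E,s)$ be a flow graph with dominator tree $D$, let $(x,y)\in E$ with $x$ reachable from $s$, and let $G'$ be obtained from $G$ by deleting $(x,y)$, where $y$ becomes unreachable from $s$ in $G'$. If a vertex $v$ that is reachable in both $G$ and $G'$ is affected by the deletion, i.e., $d'(v)\neq d(v)$, then there is a path $P$ in $G$ from $y$ to $v$ such that $\mathit{depth}(d(v))<\mathit{depth}(w)$ for all vertices $w$ on $P$.
   Context: A flow graph $G=(V,E,s)$ is a directed graph with start vertex $s$; a vertex is reachable if there is a path from $s$ to it. For reachable vertices, $w$ dominates $v$ if every path from $s$ to $v$ contains $w$. The immediate dominator $d(v)$ of a reachable $v\neq s$ is the proper dominator of $v$ that is dominated by all other proper dominators of $v$. The dominator tree $D$ is the tree on the reachable vertices rooted at $s$ in which the parent of $v\neq s$ is $d(v)$; $\mathit{depth}(w)$ is the depth of $w$ in $D$ (the dominator tree of $G$, before the deletion). $d'(v)$ denotes the immediate dominator of $v$ in $G'$. *)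

theory Defs
  imports Main
begin

definition flow_graph :: "'a set \<Rightarrow> ('a \<times> 'a) set \<Rightarrow> 'a \<Rightarrow> bool" where
  "flow_graph V E s \<longleftrightarrow> finite V \<and> E \<subseteq> V \<times> V \<and> s \<in> V"

definition is_path :: "('a \<times> 'a) set \<Rightarrow> 'a list \<Rightarrow> bool" where
  "is_path E p \<longleftrightarrow> p \<noteq> [] \<and> successively (\<lambda>a b. (a, b) \<in> E) p"

definition path_from_to :: "('a \<times> 'a) set \<Rightarrow> 'a list \<Rightarrow> 'a \<Rightarrow> 'a \<Rightarrow> bool" where
  "path_from_to E p u v \<longleftrightarrow> is_path E p \<and> hd p = u \<and> last p = v"

definition reachable :: "('a \<times> 'a) set \<Rightarrow> 'a \<Rightarrow> 'a \<Rightarrow> bool" where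
  "reachable E s v \<longleftrightarrow> (\<exists>p. path_from_to E p s v)"

definition dominates :: "('a \<times> 'a) set \<Rightarrow> 'a \<Rightarrow> 'a \<Rightarrow> 'a \<Rightarrow> bool" where
  "dominates E s w v \<longleftrightarrow> reachable E s w \<and> reachable E s v \<and>
     (\<forall>p. path_from_to E p s v \<longrightarrow> w \<in> set p)"

definition idom :: "('a \<times> 'a) set \<Rightarrow> 'a \<Rightarrow> 'a \<Rightarrow> 'a" where
  "idom E s v = (THE w. w \<noteq> v \<and> dominates E s w v \<and>
      (\<forall>u. u \<noteq> v \<and> dominates E s u v \<longrightarrow> dominates E s u w))"

text \<open>Depth in the dominator tree D (parent of v is idom v, root s):
  the number of parent steps needed to reach the root.\<close>
definition dom_depth :: "('a \<times> 'a) set \<Rightarrow> 'a \<Rightarrow> 'a \<Rightarrow> nat" where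
  "dom_depth E s w = (LEAST n. (idom E s ^^ n) w = s)"

end

theory Submission
  imports Defs
begin

definition Dm :: "('a \<times> 'a) set \<Rightarrow> 'a \<Rightarrow> 'a \<Rightarrow> 'a set" where
  "Dm E s w = {u. dominates E s u w}"

lemma path_prefix:
  assumes "path_from_to E (p @ q) a c" "p \<noteq> []"
  shows "path_from_to E p a (last p)"
  using assms by (auto simp: path_from_to_def is_path_def successively_append_iff)

lemma path_suffix:
  assumes "path_from_to E (p @ q) a c" "q \<noteq> []"
  shows "path_from_to E q (hd q) c"
  using assms by (auto simp: path_from_to_def is_path_def successively_append_iff)

lemma path_join:
  assumes "path_from_to E p a b" "path_from_to E (b # q) b c"
  shows "path_from_to E (p @ q) a c"
  using assms by (cases q) (auto simp: path_from_to_def is_path_def successively_append_iff)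

lemma reach_in_path:
  assumes "path_from_to E p s b" "a \<in> set p"
  shows "reachable E s a"
proof -
  obtain p1 p2 where p: "p = p1 @ a # p2" using assms(2) by (meson split_list)
  have "path_from_to E ((p1 @ [a]) @ p2) s b" using assms(1) p by simp
  from path_prefix[OF this] have "path_from_to E (p1 @ [a]) s a" by simp
  thus ?thesis unfolding reachable_def by blast
qed

lemma dom_reach: "dominates E s a b \<Longrightarrow> reachable E s a \<and> reachable E s b"
  by (simp add: dominates_def)

lemma dom_refl: "reachable E s w \<Longrightarrow> dominates E s w w"
  unfolding dominates_def path_from_to_def is_path_def by auto

lemma reach_s: "reachable E s s"
  unfolding reachable_def path_from_to_def is_path_def by (rule exI[of _ "[s]"]) simp

lemma dom_start: "reachable E s w \<Longrightarrow> dominates E s s w"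
  using reach_s[of E s] unfolding dominates_def path_from_to_def is_path_def by (auto intro: list.set_sel)

lemma not_dom:
  assumes "\<not> dominates E s a b" "reachable E s a" "reachable E s b"
  shows "\<exists>q. path_from_to E q s b \<and> a \<notin> set q"
  using assms unfolding dominates_def by blast

lemma dom_trans:
  assumes "dominates E s a b" "dominates E s b c"
  shows "dominates E s a c"
proof -
  have "a \<in> set p" if "path_from_to E p s c" for p
  proof -
    have "b \<in> set p" using assms(2) that unfolding dominates_def by blast
    then obtain p1 p2 where p: "p = p1 @ b # p2" by (meson split_list)
    have "path_from_to E ((p1 @ [b]) @ p2) s c" using that p by simp
    from path_prefix[OF this] have "path_from_to E (p1 @ [b]) s b" by simp
    hence "a \<in> set (p1 @ [b])" using assms(1) unfolding dominates_def by blast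
    thus ?thesis using p by auto
  qed
  thus ?thesis using assms unfolding dominates_def by blast
qed

lemma dom_antisym:
  assumes "dominates E s a b" "dominates E s b a"
  shows "a = b"
proof (rule ccontr)
  assume ne: "a \<noteq> b"
  obtain p where p: "path_from_to E p s b" using assms(1) unfolding dominates_def reachable_def by blast
  have "a \<in> set p" using assms(1) p unfolding dominates_def by blast
  then obtain p1 p2 where pp: "p = p1 @ a # p2" "a \<notin> set p1" by (meson split_list_first)
  have "path_from_to E ((p1 @ [a]) @ p2) s b" using p pp by simp
  from path_prefix[OF this] have pa: "path_from_to E (p1 @ [a]) s a" by simp
  hence "b \<in> set (p1 @ [a])" using assms(2) unfolding dominates_def by blast
  hence "b \<in> set p1" using ne by auto
  then obtain q1 q2 where qq: "p1 = q1 @ b # q2" by (meson split_list)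
  have "path_from_to E ((q1 @ [b]) @ (q2 @ [a])) s a" using pa qq by simp
  from path_prefix[OF this] have "path_from_to E (q1 @ [b]) s b" by simp
  hence "a \<in> set (q1 @ [b])" using assms(1) unfolding dominates_def by blast
  thus False using pp qq ne by auto
qed

lemma dom_chain:
  assumes "dominates E s a w" "dominates E s b w"
  shows "dominates E s a b \<or> dominates E s b a"
proof (rule ccontr)
  assume c: "\<not> (dominates E s a b \<or> dominates E s b a)"
  have ra: "reachable E s a" and rb: "reachable E s b" and rw: "reachable E s w"
    using assms by (auto simp: dominates_def)
  obtain q where q: "path_from_to E q s b" "a \<notin> set q" using not_dom[of E s a b] c ra rb by blast
  obtain r where r: "path_from_to E r s a" "b \<notin> set r" using not_dom[of E s b a] c ra rb by blast
  obtain p where p: "path_from_to E p s w" using rw unfolding reachable_def by blast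
  have "b \<in> set p" using assms(2) p unfolding dominates_def by blast
  then obtain p1 p2 where pp: "p = p1 @ b # p2" "b \<notin> set p2" by (meson split_list_last)
  have bp2: "path_from_to E (b # p2) b w" using path_suffix[of E p1 "b # p2" s w] p pp by simp
  show False
  proof (cases "a \<in> set p2")
    case False
    have "path_from_to E (q @ p2) s w" using path_join[OF q(1) bp2] .
    moreover have "a \<notin> set (q @ p2)" using False q by simp
    ultimately show False using assms(1) unfolding dominates_def by blast
  next
    case True
    then obtain p3 p4 where pq: "p2 = p3 @ a # p4" "a \<notin> set p4" by (meson split_list_last)
    have "path_from_to E ((p1 @ b # p3) @ a # p4) s w" using p pp pq by simp
    from path_suffix[OF this] have ap4: "path_from_to E (a # p4) a w" by simp
    have "path_from_to E (r @ p4) s w" using path_join[OF r(1) ap4] .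
    moreover have "b \<notin> set (r @ p4)" using r pp pq by auto
    ultimately show False using assms(2) unfolding dominates_def by blast
  qed
qed

lemma Dm_sub:
  assumes "path_from_to E p s w"
  shows "Dm E s w \<subseteq> set p"
  using assms unfolding Dm_def dominates_def by blast

lemma Dm_finite:
  assumes "reachable E s w"
  shows "finite (Dm E s w)"
  using assms Dm_sub unfolding reachable_def by (meson List.finite_set finite_subset)

lemma Dm_s: "Dm E s s = {s}"
proof -
  have "path_from_to E [s] s s" unfolding path_from_to_def is_path_def by simp
  from Dm_sub[OF this] have "Dm E s s \<subseteq> {s}" by simp
  moreover have "s \<in> Dm E s s" using dom_refl[OF reach_s] unfolding Dm_def by simp
  ultimately show ?thesis by blast
qed

lemma idom_props:
  assumes rw: "reachable E s w" and ws: "w \<noteq> s"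
  shows "idom E s w \<noteq> w \<and> dominates E s (idom E s w) w \<and>
    (\<forall>u. u \<noteq> w \<and> dominates E s u w \<longrightarrow> dominates E s u (idom E s w))"
proof -
  define S where "S = Dm E s w - {w}"
  have fS: "finite S" using Dm_finite[OF rw] S_def by simp
  have sS: "s \<in> S" using dom_start[OF rw] ws S_def by (auto simp: Dm_def)
  define M where "M = Max ((\<lambda>z. card (Dm E s z)) ` S)"
  have "M \<in> (\<lambda>z. card (Dm E s z)) ` S" unfolding M_def using fS sS by (intro Max_in) auto
  then obtain m where m: "m \<in> S" "card (Dm E s m) = M" by blast
  have mx: "card (Dm E s z) \<le> card (Dm E s m)" if "z \<in> S" for z
  proof -
    have "card (Dm E s z) \<le> M" unfolding M_def using fS that by (intro Max_ge) auto
    thus ?thesis using m(2) by simp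
  qed
  have md: "dominates E s m w" "m \<noteq> w" using m S_def by (auto simp: Dm_def)
  have P: "\<forall>u. u \<noteq> w \<and> dominates E s u w \<longrightarrow> dominates E s u m"
  proof (intro allI impI)
    fix u assume u: "u \<noteq> w \<and> dominates E s u w"
    have uS: "u \<in> S" using u S_def by (auto simp: Dm_def)
    show "dominates E s u m"
    proof (cases "u = m")
      case True then show ?thesis using dom_refl[of E s m] dom_reach[OF md(1)] by simp
    next
      case False
      show ?thesis
      proof (rule ccontr)
        assume nd: "\<not> dominates E s u m"
        hence mu: "dominates E s m u" using dom_chain[of E s u w m] u md by blast
        have ru: "reachable E s u" using u dom_reach[of E s u w] by simp
        have "Dm E s m \<subseteq> Dm E s u" unfolding Dm_def using dom_trans[OF _ mu] by blast
        moreover have "u \<in> Dm E s u" by (simp add: Dm_def dom_refl[OF ru])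
        moreover have "u \<notin> Dm E s m" using nd by (simp add: Dm_def)
        ultimately have "Dm E s m \<subset> Dm E s u" by blast
        hence "card (Dm E s m) < card (Dm E s u)" by (rule psubset_card_mono[OF Dm_finite[OF ru]])
        thus False using mx[OF uS] by simp
      qed
    qed
  qed
  have "idom E s w = m"
    unfolding idom_def
  proof (rule the_equality)
    show "m \<noteq> w \<and> dominates E s m w \<and> (\<forall>u. u \<noteq> w \<and> dominates E s u w \<longrightarrow> dominates E s u m)"
      using md P by blast
  next
    fix z assume z: "z \<noteq> w \<and> dominates E s z w \<and> (\<forall>u. u \<noteq> w \<and> dominates E s u w \<longrightarrow> dominates E s u z)"
    hence "dominates E s m z" using md by blast
    moreover have "dominates E s z m" using P z by blast
    ultimately show "z = m" using dom_antisym[of E s z m] by simp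
  qed
  thus ?thesis using md P by simp
qed

lemma Dm_idom:
  assumes rw: "reachable E s w" and ws: "w \<noteq> s"
  shows "Dm E s (idom E s w) = Dm E s w - {w}"
proof -
  have I1: "idom E s w \<noteq> w" and I2: "dominates E s (idom E s w) w"
    and I3: "\<And>u. u \<noteq> w \<Longrightarrow> dominates E s u w \<Longrightarrow> dominates E s u (idom E s w)"
    using idom_props[OF rw ws] by auto
  show ?thesis
  proof
    show "Dm E s (idom E s w) \<subseteq> Dm E s w - {w}"
    proof
      fix u assume "u \<in> Dm E s (idom E s w)"
      hence u: "dominates E s u (idom E s w)" by (simp add: Dm_def)
      have "dominates E s u w" using dom_trans[OF u I2] .
      moreover have "u \<noteq> w"
      proof
        assume "u = w"
        hence "idom E s w = w" using dom_antisym[OF I2] u by simp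
        thus False using I1 by simp
      qed
      ultimately show "u \<in> Dm E s w - {w}" by (simp add: Dm_def)
    qed
  next
    show "Dm E s w - {w} \<subseteq> Dm E s (idom E s w)" using I3 by (auto simp: Dm_def)
  qed
qed

lemma depth_card:
  assumes rw: "reachable E s w"
  shows "dom_depth E s w = card (Dm E s w) - 1"
proof -
  define c where "c = card (Dm E s w)"
  define f where "f = idom E s"
  have c1: "c \<ge> 1" using Dm_finite[OF rw] dom_refl[OF rw] unfolding c_def Dm_def
    by (metis One_nat_def Suc_leI card_gt_0_iff empty_iff mem_Collect_eq)
  have key: "k \<le> c - 1 \<longrightarrow> reachable E s ((f ^^ k) w) \<and> card (Dm E s ((f ^^ k) w)) = c - k" for k
  proof (induction k)
    case 0 then show ?case using rw c_def by simp
  next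
    case (Suc k)
    show ?case
    proof
      assume k: "Suc k \<le> c - 1"
      define z where "z = (f ^^ k) w"
      have rz: "reachable E s z" and cz: "card (Dm E s z) = c - k" using Suc k z_def by auto
      have zs: "z \<noteq> s" using cz k Dm_s[of E s] by auto
      have "dominates E s (f z) z" using idom_props[OF rz zs] f_def by simp
      hence "reachable E s (f z)" using dom_reach by metis
      moreover have "card (Dm E s (f z)) = c - Suc k"
        using Dm_idom[OF rz zs] f_def cz Dm_finite[OF rz] dom_refl[OF rz]
        by (simp add: Dm_def)
      ultimately show "reachable E s ((f ^^ Suc k) w) \<and> card (Dm E s ((f ^^ Suc k) w)) = c - Suc k"
        using z_def by simp
    qed
  qed
  have last: "(f ^^ (c - 1)) w = s"
  proof -
    define z where "z = (f ^^ (c - 1)) w"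
    have rz: "reachable E s z" and cz: "card (Dm E s z) = 1" using key[of "c - 1"] c1 z_def by auto
    have "s \<in> Dm E s z" "z \<in> Dm E s z" using dom_start[OF rz] dom_refl[OF rz] by (auto simp: Dm_def)
    thus ?thesis using cz z_def by (metis card_1_singletonE singletonD)
  qed
  have "(LEAST n. (f ^^ n) w = s) = c - 1"
  proof (rule Least_equality)
    show "(f ^^ (c - 1)) w = s" by (rule last)
  next
    fix m assume m: "(f ^^ m) w = s"
    show "c - 1 \<le> m"
    proof (rule ccontr)
      assume "\<not> c - 1 \<le> m"
      hence "card (Dm E s ((f ^^ m) w)) = c - m" "m < c - 1" using key[of m] by auto
      thus False using m Dm_s[of E s] by simp
    qed
  qed
  thus ?thesis unfolding dom_depth_def f_def c_def by simp
qed

lemma dom_mono: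
  assumes "E' \<subseteq> E" "dominates E s a b" "reachable E' s b"
  shows "dominates E' s a b"
proof -
  have sub: "path_from_to E p u v" if "path_from_to E' p u v" for p u v
    using that assms(1) unfolding path_from_to_def is_path_def
    by (auto elim: successively_mono)
  have inp: "a \<in> set p" if "path_from_to E' p s b" for p
    using sub[OF that] assms(2) unfolding dominates_def by blast
  obtain p where "path_from_to E' p s b" using assms(3) reachable_def by metis
  hence "reachable E' s a" using inp reach_in_path by metis
  thus ?thesis using assms(3) inp unfolding dominates_def by blast
qed

lemma path_mono:
  assumes "E' \<subseteq> E" "path_from_to E' p u v"
  shows "path_from_to E p u v"
  using assms unfolding path_from_to_def is_path_def
  by (auto elim: successively_mono)

lemma reach_mono:
  assumes "E' \<subseteq> E" "reachable E' s b"
  shows "reachable E s b"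
  using assms path_mono unfolding reachable_def by metis

lemma succ_split:
  "successively P xs \<Longrightarrow> \<not> successively Q xs \<Longrightarrow>
    \<exists>as a b bs. xs = as @ a # b # bs \<and> P a b \<and> \<not> Q a b"
proof (induction xs)
  case Nil then show ?case by simp
next
  case (Cons a xs)
  show ?case
  proof (cases xs)
    case Nil then show ?thesis using Cons by simp
  next
    case (Cons b ys)
    show ?thesis
    proof (cases "Q a b")
      case True
      hence "\<not> successively Q xs" using Cons.prems Cons by simp
      moreover have "successively P xs" using Cons.prems Cons by simp
      ultimately obtain as c d bs where "xs = as @ c # d # bs" "P c d" "\<not> Q c d"
        using Cons.IH by blast
      thus ?thesis by (intro exI[of _ "a # as"]) auto
    next
      case False
      thus ?thesis using Cons.prems Cons by (intro exI[of _ "[]"]) auto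
    qed
  qed
qed


theorem lemma5:
  fixes V :: "'a set" and E :: "('a \<times> 'a) set" and s x y v :: 'a
  assumes "flow_graph V E s"
    and "(x, y) \<in> E"
    and "reachable E s x"
    and "\<not> reachable (E - {(x, y)}) s y"
    and "reachable E s v"
    and "reachable (E - {(x, y)}) s v"
    and "v \<noteq> s"
    and "idom (E - {(x, y)}) s v \<noteq> idom E s v"
  shows "\<exists>P. path_from_to E P y v \<and>
           (\<forall>w \<in> set P. dom_depth E s (idom E s v) < dom_depth E s w)"
proof -
  define E' where "E' = E - {(x, y)}"
  define d where "d = idom E s v"
  define u where "u = idom E' s v"
  have sub: "E' \<subseteq> E" unfolding E'_def by blast
  have rv: "reachable E s v" and rv': "reachable E' s v" using assms E'_def by auto
  have ud: "u \<noteq> d" using assms(8) u_def d_def E'_def by simp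
  have D1: "d \<noteq> v" and D2: "dominates E s d v"
    and D3: "\<And>t. t \<noteq> v \<Longrightarrow> dominates E s t v \<Longrightarrow> dominates E s t d"
    using idom_props[OF rv assms(7)] d_def by auto
  have U1: "u \<noteq> v" and U2: "dominates E' s u v"
    and U3: "\<And>t. t \<noteq> v \<Longrightarrow> dominates E' s t v \<Longrightarrow> dominates E' s t u"
    using idom_props[OF rv' assms(7)] u_def by auto
  have D2': "dominates E' s d v" using dom_mono[OF sub D2 rv'] .
  have du': "dominates E' s d u" using U3[OF D1 D2'] .
  have rd': "reachable E' s d" using D2' by (simp add: dominates_def)
  have nud: "\<not> dominates E' s u d"
  proof
    assume "dominates E' s u d"
    hence "u = d" using dom_antisym[OF _ du'] by simp
    thus False using ud by simp
  qed
  have nuv: "\<not> dominates E s u v"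
  proof
    assume a: "dominates E s u v"
    hence "dominates E s u d" using D3 U1 by simp
    hence "dominates E' s u d" using dom_mono[OF sub _ rd'] by simp
    thus False using nud by simp
  qed
  have ru: "reachable E s u" using reach_mono[OF sub] U2 by (simp add: dominates_def)
  obtain R where R: "path_from_to E R s v" "u \<notin> set R"
    using not_dom[OF nuv ru rv] by blast
  have "d \<in> set R" using D2 R unfolding dominates_def by blast
  then obtain R1 R2 where RR: "R = R1 @ d # R2" "d \<notin> set R2" by (meson split_list_last)
  have pR': "path_from_to E (d # R2) d v" using path_suffix[of E R1 "d # R2" s v] R RR by simp
  have "\<not> is_path E' (d # R2)"
  proof
    assume ip: "is_path E' (d # R2)"
    have "reachable E' s u" using U2 by (simp add: dominates_def)
    then obtain q where q: "path_from_to E' q s d" "u \<notin> set q"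
      using not_dom[OF nud _ rd'] by blast
    have "path_from_to E' (d # R2) d v" using ip pR' unfolding path_from_to_def by simp
    from path_join[OF q(1) this] have "path_from_to E' (q @ R2) s v" .
    moreover have "u \<notin> set (q @ R2)" using q R RR by auto
    ultimately show False using U2 unfolding dominates_def by blast
  qed
  then obtain as a b bs where ab: "d # R2 = as @ a # b # bs" "(a, b) \<in> E" "(a, b) \<notin> E'"
    using succ_split[of "\<lambda>a b. (a, b) \<in> E" "d # R2" "\<lambda>a b. (a, b) \<in> E'"] pR'
    unfolding path_from_to_def is_path_def by blast
  have "a = x" "b = y" using ab E'_def by auto
  then obtain C where C: "R2 = C @ y # bs"
    using ab(1) by (cases as) auto
  have PP: "path_from_to E (y # bs) y v"
    using path_suffix[of E "R1 @ d # C" "y # bs" s v] R RR C by simp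
  have depth_lt: "dom_depth E s d < dom_depth E s w" if w: "w \<in> set (y # bs)" for w
  proof -
    have wR2: "w \<in> set R2" using w C by auto
    hence wd: "w \<noteq> d" using RR by auto
    have rw: "reachable E s w" using reach_in_path[OF R(1)] wR2 RR by auto
    obtain C1 C2 where CC: "R2 = C1 @ w # C2" using wR2 by (meson split_list)
    have wC2: "path_from_to E (w # C2) w v"
      using path_suffix[of E "R1 @ d # C1" "w # C2" s v] R RR CC by simp
    have dw: "dominates E s d w"
    proof (rule ccontr)
      assume "\<not> dominates E s d w"
      then obtain q where q: "path_from_to E q s w" "d \<notin> set q"
        using not_dom[of E s d w] rw D2 unfolding dominates_def by blast
      have "path_from_to E (q @ C2) s v" using path_join[OF q(1) wC2] .
      moreover have "d \<notin> set (q @ C2)" using q RR CC by auto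
      ultimately show False using D2 unfolding dominates_def by blast
    qed
    have rd: "reachable E s d" using D2 by (simp add: dominates_def)
    have "Dm E s d \<subseteq> Dm E s w" unfolding Dm_def using dom_trans[OF _ dw] by blast
    moreover have "w \<in> Dm E s w" by (simp add: Dm_def dom_refl[OF rw])
    moreover have "w \<notin> Dm E s d"
    proof
      assume "w \<in> Dm E s d"
      hence "dominates E s w d" by (simp add: Dm_def)
      hence "w = d" using dom_antisym[OF _ dw] by simp
      thus False using wd by simp
    qed
    ultimately have "Dm E s d \<subset> Dm E s w" by blast
    hence lt: "card (Dm E s d) < card (Dm E s w)" by (rule psubset_card_mono[OF Dm_finite[OF rw]])
    have "d \<in> Dm E s d" by (simp add: Dm_def dom_refl[OF rd])
    hence "card (Dm E s d) \<ge> 1" using Dm_finite[OF rd]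
      by (metis One_nat_def Suc_leI card_gt_0_iff empty_iff)
    thus ?thesis using lt depth_card[OF rw] depth_card[OF rd] by simp
  qed
  show ?thesis using PP depth_lt d_def by blast
qed

end
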